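(* Let $X$ be a real Hilbert space, let $T\colon X\to X$ be nonexpansive, let $v:=P_{\overline{\operatorname{ran}}(\mathrm{Id}-T)}0$ and assume $v\in\operatorname{ran}(\mathrm{Id}-T)$. Let $y_0\in\operatorname{Fix}(v+T)$. Then: (i) $y_0-\mathbb R_+v\subseteq\operatorname{Fix}(v+T)$; (ii) $\operatorname{Fix}(v+T)-\mathbb R_+v=\operatorname{Fix}(v+T)$; (iii) $-\mathbb R_+v\subseteq\operatorname{rec}(\operatorname{Fix}(v+T))$; (iv) for all $n\in\mathbb N$, $T^ny_0=y_0-nv$; (v) $\left]-\infty,1\right]\cdot v+\operatorname{Fix}(T_{-v})\subseteq\operatorname{Fix}(v+T)$; in particular $\operatorname{Fix}(T_{-v})\subseteq\operatorname{Fix}(v+T)$; (vi) for every $x\in X$, the sequence $(T^nx+nv)_{n\in\mathbb N}$ is Fejér monotone with respect to both $\operatorname{Fix}(v+T)$ and $\operatorname{Fix}(T_{-v})$; (vii) if $x_0\in\operatorname{Fix}(T_{-v})$ and $x_n:=T^nx_0$, then $x_n=x_0-nv$ for all $n$ and $(x_n)_{n\in\mathbb N}$ lies in $\operatorname{Fix}(T_{-v})$.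
   Context: $\overline{\operatorname{ran}}(\mathrm{Id}-T)$ is the closure of the range of $\mathrm{Id}-T$; it is convex for nonexpansive $T$, so $v$ is well-defined (the infimal displacement vector, the unique element of minimal norm of that closed convex set). $T_{-v}x:=T(x+v)$ and $(v+T)x:=v+Tx$. $\operatorname{Fix}$ denotes the fixed point set. $\operatorname{rec}C=\{x: x+C\subseteq C\}$ is the recession cone. A sequence $(y_n)$ is Fejér monotone with respect to $C$ if $\|y_{n+1}-c\|\le\|y_n-c\|$ for all $c\in C$ and all $n$. *)

theory Defs
  imports "HOL-Analysis.Analysis"
begin

definition nonexpansive :: "('a::real_normed_vector \<Rightarrow> 'a) \<Rightarrow> bool" where
  "nonexpansive T \<longleftrightarrow> (\<forall>x y. norm (T x - T y) \<le> norm (x - y))"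

text \<open>Metric projection onto a set C (nearest point); same as the library's
  closest_point but without the heine_borel restriction.  For nonempty closed
  convex C in a Hilbert space it is the unique nearest point.\<close>
definition proj :: "'a::real_inner set \<Rightarrow> 'a \<Rightarrow> 'a" where
  "proj C x = (SOME p. p \<in> C \<and> (\<forall>y\<in>C. dist x p \<le> dist x y))"

definition Fix :: "('a \<Rightarrow> 'a) \<Rightarrow> 'a set" where
  "Fix f = {x. f x = x}"

definition rec_cone :: "'a::real_vector set \<Rightarrow> 'a set" where
  "rec_cone C = {x. \<forall>c\<in>C. x + c \<in> C}"

definition fejer_monotone :: "(nat \<Rightarrow> 'a::real_normed_vector) \<Rightarrow> 'a set \<Rightarrow> bool" where
  "fejer_monotone y C \<longleftrightarrow> (\<forall>c\<in>C. \<forall>n. norm (y (Suc n) - c) \<le> norm (y n - c))"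

end

theory Submission
  imports Defs
begin

lemma mono_A:
  fixes T :: "'a::real_inner \<Rightarrow> 'a"
  assumes "nonexpansive T"
  shows "inner ((x - T x) - (z - T z)) (x - z) \<ge> 0"
proof -
  have n: "norm (T x - T z) \<le> norm (x - z)" using assms unfolding nonexpansive_def by blast
  have "inner (T x - T z) (x - z) \<le> norm (T x - T z) * norm (x - z)" by (rule norm_cauchy_schwarz)
  also have "\<dots> \<le> norm (x - z) * norm (x - z)" using n by (simp add: mult_right_mono)
  finally have "inner (T x - T z) (x - z) \<le> inner (x - z) (x - z)"
    by (simp add: power2_eq_square[symmetric] power2_norm_eq_inner)
  moreover have "inner ((x - T x) - (z - T z)) (x - z) = inner (x - z) (x - z) - inner (T x - T z) (x - z)"
    by (simp add: algebra_simps inner_diff_left)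
  ultimately show ?thesis by simp
qed

lemma exist_xt:
  fixes T :: "'a::{real_inner,complete_space} \<Rightarrow> 'a"
  assumes "nonexpansive T" "t > 0"
  shows "\<exists>x. x - T x = c - t *\<^sub>R x"
proof -
  define f where "f x = (1 / (1 + t)) *\<^sub>R (T x + c)" for x
  have "\<forall>x y. dist (f x) (f y) \<le> (1 / (1 + t)) * dist x y"
  proof (intro allI)
    fix x y
    have "f x - f y = (1 / (1 + t)) *\<^sub>R (T x - T y)" unfolding f_def by (simp add: algebra_simps)
    hence "dist (f x) (f y) = (1 / (1 + t)) * norm (T x - T y)" using assms(2) by (simp add: dist_norm)
    also have "\<dots> \<le> (1 / (1 + t)) * norm (x - y)"
      using assms unfolding nonexpansive_def by (intro mult_left_mono) auto
    finally show "dist (f x) (f y) \<le> (1 / (1 + t)) * dist x y" by (simp add: dist_norm)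
  qed
  moreover have "0 \<le> 1 / (1 + t)" "1 / (1 + t) < (1::real)" using assms(2) by auto
  ultimately obtain x where fx: "f x = x" using banach_fix_type by metis
  hence "(1 + t) *\<^sub>R ((1 / (1 + t)) *\<^sub>R (T x + c)) = (1 + t) *\<^sub>R x" unfolding f_def by simp
  hence "(1 + t) *\<^sub>R x = T x + c" using assms(2) by simp
  hence "x - T x = c - t *\<^sub>R x" by (simp add: algebra_simps)
  thus ?thesis by blast
qed

lemma real_est:
  fixes r t C B :: real
  assumes "r \<ge> 0" "t > 0" "t \<le> 1" "r^2 \<le> t*C + t*B*r" "B \<ge> 0"
  shows "r^2 \<le> t*(2*C + B^2)"
proof -
  have "0 \<le> (t*B - r)^2" by simp
  hence "2*(t*B*r) \<le> (t*B)^2 + r^2" by (simp add: power2_diff)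
  moreover have "(t*B)^2 \<le> t * B^2"
  proof -
    have b: "t*(B^2) \<le> B^2" using assms(2,3) by (intro mult_left_le_one_le) auto
    have "(t*B)^2 = t*(t*B^2)" by (simp add: power2_eq_square)
    also have "\<dots> \<le> t*B^2" using b assms(2) by (intro mult_left_mono) auto
    finally show ?thesis .
  qed
  ultimately show ?thesis using assms(4) by (simp add: algebra_simps)
qed

lemma inner_comb_ident:
  fixes a b :: "'a::real_inner"
  shows "norm (l *\<^sub>R a + (1 - l) *\<^sub>R b)^2 = l * norm a^2 + (1 - l) * norm b^2 - l * (1 - l) * norm (a - b)^2"
  by (simp add: power2_norm_eq_inner inner_add_left inner_add_right inner_diff_left inner_diff_right
      inner_commute algebra_simps)

lemma para_ident:
  fixes a b :: "'a::real_inner"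
  shows "norm (a - b)^2 = 2 * norm a^2 + 2 * norm b^2 - 4 * norm ((1/2) *\<^sub>R (a + b))^2"
  by (simp add: power2_norm_eq_inner inner_add_left inner_add_right inner_diff_left inner_diff_right
      inner_commute algebra_simps)

lemma combo_ident:
  fixes x z1 z2 a1 a2 :: "'a::real_inner"
  shows "l * inner ((l *\<^sub>R a1 + (1 - l) *\<^sub>R a2 - t *\<^sub>R x) - a1) (x - z1)
       + (1 - l) * inner ((l *\<^sub>R a1 + (1 - l) *\<^sub>R a2 - t *\<^sub>R x) - a2) (x - z2)
     = - t * inner x x - inner (l *\<^sub>R a1 + (1 - l) *\<^sub>R a2) (l *\<^sub>R z1 + (1 - l) *\<^sub>R z2)
       + t * inner x (l *\<^sub>R z1 + (1 - l) *\<^sub>R z2) + (l * inner a1 z1 + (1 - l) * inner a2 z2)"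
  by (simp add: inner_add_left inner_add_right inner_diff_left inner_diff_right
      inner_commute algebra_simps)

lemma combo_closure:
  fixes T :: "'a::{real_inner,complete_space} \<Rightarrow> 'a"
  assumes ne: "nonexpansive T" and l: "0 \<le> l" "l \<le> 1"
  shows "l *\<^sub>R (z1 - T z1) + (1 - l) *\<^sub>R (z2 - T z2) \<in> closure (range (\<lambda>x. x - T x))"
proof -
  define a1 where "a1 = z1 - T z1"
  define a2 where "a2 = z2 - T z2"
  define c where "c = l *\<^sub>R a1 + (1 - l) *\<^sub>R a2"
  define zb where "zb = l *\<^sub>R z1 + (1 - l) *\<^sub>R z2"
  define K where "K = l * inner a1 z1 + (1 - l) * inner a2 z2"
  define C where "C = \<bar>K\<bar> + norm c * norm zb"
  define B where "B = norm zb"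
  have C0: "C \<ge> 0" and B0: "B \<ge> 0" unfolding C_def B_def by auto
  have key: "\<exists>x. x - T x = c - t *\<^sub>R x \<and> (norm (t *\<^sub>R x))^2 \<le> t*(2*C+B^2)"
    if t: "0 < t" "t \<le> 1" for t :: real
  proof -
    obtain x where e: "x - T x = c - t *\<^sub>R x" using exist_xt[OF ne t(1)] by blast
    have h1: "inner ((c - t *\<^sub>R x) - a1) (x - z1) \<ge> 0"
      using mono_A[OF ne, of x z1] unfolding a1_def e .
    have h2: "inner ((c - t *\<^sub>R x) - a2) (x - z2) \<ge> 0"
      using mono_A[OF ne, of x z2] unfolding a2_def e .
    have "l * inner ((c - t *\<^sub>R x) - a1) (x - z1) + (1 - l) * inner ((c - t *\<^sub>R x) - a2) (x - z2) \<ge> 0"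
      using h1 h2 l by simp
    hence "- t * inner x x - inner c zb + t * inner x zb + K \<ge> 0"
      unfolding c_def zb_def K_def combo_ident .
    hence i1: "t * inner x x \<le> K - inner c zb + t * inner x zb" by simp
    have "K \<le> \<bar>K\<bar>" by simp
    moreover have "- inner c zb \<le> norm c * norm zb"
      using Cauchy_Schwarz_ineq2[of c zb] by simp
    moreover have "t * inner x zb \<le> t * (norm x * B)"
      unfolding B_def using t by (intro mult_left_mono) (auto simp: norm_cauchy_schwarz)
    ultimately have i2: "t * norm x ^ 2 \<le> C + t * norm x * B"
      using i1 unfolding C_def by (simp add: power2_norm_eq_inner algebra_simps)
    define r where "r = t * norm x"
    have rn: "norm (t *\<^sub>R x) = r" unfolding r_def using t by simp
    have "r^2 = t * (t * norm x ^ 2)" unfolding r_def by (simp add: power2_eq_square)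
    also have "\<dots> \<le> t * (C + t * norm x * B)" using i2 t by (intro mult_left_mono) auto
    also have "\<dots> = t * C + t * B * r" unfolding r_def by (simp add: algebra_simps)
    finally have "r^2 \<le> t * C + t * B * r" .
    hence "r^2 \<le> t*(2*C+B^2)" using real_est[of r t C B] t B0 unfolding r_def by simp
    thus ?thesis using e rn by auto
  qed
  have "c \<in> closure (range (\<lambda>x. x - T x))"
    unfolding closure_approachable
  proof (intro allI impI)
    fix \<epsilon> :: real assume ep: "\<epsilon> > 0"
    define Q where "Q = 2*C+B^2"
    have Q0: "Q \<ge> 0" unfolding Q_def using C0 by simp
    define t where "t = min 1 (\<epsilon>^2 / (Q + 1))"
    have t: "0 < t" "t \<le> 1" unfolding t_def using ep Q0 by auto
    obtain x where x: "x - T x = c - t *\<^sub>R x" "(norm (t *\<^sub>R x))^2 \<le> t*Q"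
      using key[OF t] unfolding Q_def by blast
    have "t * Q \<le> (\<epsilon>^2 / (Q + 1)) * Q" unfolding t_def using Q0 by (intro mult_right_mono) auto
    also have "\<dots> < \<epsilon>^2"
    proof -
      have "(\<epsilon>^2 / (Q + 1)) * Q = \<epsilon>^2 * (Q / (Q + 1))" by simp
      also have "\<dots> < \<epsilon>^2 * 1" using ep Q0 by (intro mult_strict_left_mono) auto
      finally show ?thesis by simp
    qed
    finally have "(norm (t *\<^sub>R x))^2 < \<epsilon>^2" using x(2) by linarith
    hence "norm (t *\<^sub>R x) < \<epsilon>" using ep by (meson abs_norm_cancel power2_less_imp_less less_imp_le)
    moreover have "dist (x - T x) c = norm (t *\<^sub>R x)" unfolding x(1) dist_norm by simp
    ultimately have "dist (x - T x) c < \<epsilon>" by simp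
    thus "\<exists>y\<in>range (\<lambda>x. x - T x). dist y c < \<epsilon>" by blast
  qed
  thus ?thesis unfolding c_def a1_def a2_def .
qed

lemma D_convex:
  fixes T :: "'a::{real_inner,complete_space} \<Rightarrow> 'a"
  assumes ne: "nonexpansive T"
  shows "convex (closure (range (\<lambda>x. x - T x)))"
  unfolding convex_def
proof (intro ballI allI impI)
  let ?S = "range (\<lambda>x. x - T x)"
  fix x y and u w :: real
  assume xy: "x \<in> closure ?S" "y \<in> closure ?S" and uw: "0 \<le> u" "0 \<le> w" "u + w = 1"
  define f where "f p = u *\<^sub>R fst p + w *\<^sub>R snd p" for p :: "'a \<times> 'a"
  have "f ` closure (?S \<times> ?S) \<subseteq> closure ?S"
  proof (rule image_closure_subset)
    show "continuous_on (closure (?S \<times> ?S)) f" unfolding f_def by (intro continuous_intros)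
    show "closed (closure ?S)" by simp
    show "f ` (?S \<times> ?S) \<subseteq> closure ?S"
    proof
      fix q assume "q \<in> f ` (?S \<times> ?S)"
      then obtain z1 z2 where q: "q = u *\<^sub>R (z1 - T z1) + w *\<^sub>R (z2 - T z2)"
        unfolding f_def by auto
      have w: "w = 1 - u" using uw by simp
      have u1: "u \<le> 1" using uw by simp
      show "q \<in> closure ?S" unfolding q w using combo_closure[OF ne uw(1) u1, of z1 z2] .
    qed
  qed
  moreover have "(x, y) \<in> closure (?S \<times> ?S)" using xy by (simp add: closure_Times)
  ultimately show "u *\<^sub>R x + w *\<^sub>R y \<in> closure ?S" unfolding f_def by force
qed

lemma min_norm_exists:
  fixes D :: "'a::{real_inner,complete_space} set"
  assumes cv: "convex D" and cl: "closed D" and ne: "D \<noteq> {}"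
  shows "\<exists>p\<in>D. \<forall>y\<in>D. norm p \<le> norm y"
proof -
  define m where "m = Inf (norm ` D)"
  have bdd: "bdd_below (norm ` D)" by (rule bdd_belowI[of _ 0]) auto
  have mle: "m \<le> norm y" if "y \<in> D" for y
    unfolding m_def using bdd that by (intro cInf_lower) auto
  have m0: "m \<ge> 0" unfolding m_def using ne by (intro cInf_greatest) auto
  have ex: "\<exists>y\<in>D. norm y < m + e" if "e > 0" for e
  proof (rule ccontr)
    assume "\<not> ?thesis"
    hence "\<forall>y\<in>D. m + e \<le> norm y" by auto
    hence "m + e \<le> m" unfolding m_def using ne by (intro cInf_greatest) auto
    thus False using that by simp
  qed
  have "\<exists>y\<in>D. norm y ^ 2 < m^2 + 1 / real (Suc k)" for k
  proof -
    define s where "s = sqrt (m^2 + 1 / real (Suc k))"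
    have "m = sqrt (m^2)" using m0 by simp
    also have "\<dots> < s" unfolding s_def by (intro real_sqrt_less_mono) auto
    finally have "s - m > 0" by simp
    then obtain y where y: "y \<in> D" "norm y < m + (s - m)" using ex by blast
    have "norm y ^ 2 < s ^ 2" using y(2) by (intro power_strict_mono) auto
    also have "s ^ 2 = m^2 + 1 / real (Suc k)" unfolding s_def by (simp add: add_nonneg_nonneg)
    finally show ?thesis using y(1) by blast
  qed
  then obtain d where d: "\<And>k. d k \<in> D" "\<And>k. norm (d k) ^ 2 < m^2 + 1 / real (Suc k)" by metis
  have dd: "norm (d k - d j) ^ 2 \<le> 2 / real (Suc k) + 2 / real (Suc j)" for k j
  proof -
    have "(1/2) *\<^sub>R (d k + d j) = (1/2) *\<^sub>R d k + (1 - 1/2) *\<^sub>R d j" by (simp add: algebra_simps)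
    also have "\<dots> \<in> D" using cv d(1) unfolding convex_def by auto
    finally have "m \<le> norm ((1/2) *\<^sub>R (d k + d j))" using mle by blast
    hence "m^2 \<le> norm ((1/2) *\<^sub>R (d k + d j)) ^ 2" using m0 by (intro power_mono) auto
    thus ?thesis using para_ident[of "d k" "d j"] d(2)[of k] d(2)[of j] by linarith
  qed
  have "Cauchy d"
    unfolding Cauchy_def
  proof (intro allI impI)
    fix e :: real assume e: "e > 0"
    obtain N where N: "4 / e^2 < real N" using reals_Archimedean2 by blast
    have "4 / real (Suc N) < e^2"
    proof -
      have "4 < e^2 * real N" using N e by (simp add: field_simps)
      also have "\<dots> \<le> e^2 * real (Suc N)" using e by (intro mult_left_mono) auto
      finally show ?thesis by (simp add: field_simps)
    qed
    show "\<exists>M. \<forall>k\<ge>M. \<forall>j\<ge>M. dist (d k) (d j) < e"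
    proof (intro exI allI impI)
      fix k j assume kj: "N \<le> k" "N \<le> j"
      have "2 / real (Suc k) \<le> 2 / real (Suc N)" using kj by (intro divide_left_mono) auto
      moreover have "2 / real (Suc j) \<le> 2 / real (Suc N)" using kj by (intro divide_left_mono) auto
      ultimately have "norm (d k - d j) ^ 2 < e^2" using dd[of k j] \<open>4 / real (Suc N) < e^2\<close> by simp
      hence "norm (d k - d j) < e" using e by (meson abs_norm_cancel power2_less_imp_less less_imp_le)
      thus "dist (d k) (d j) < e" by (simp add: dist_norm)
    qed
  qed
  then obtain p where p: "d \<longlonglongrightarrow> p" using Cauchy_convergent_iff convergent_def by blast
  have pD: "p \<in> D" using closed_sequentially[OF cl] d(1) p by blast
  have l1: "(\<lambda>k. norm (d k) ^ 2) \<longlonglongrightarrow> norm p ^ 2" using p by (intro tendsto_intros)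
  have l2: "(\<lambda>k. norm (d k) ^ 2) \<longlonglongrightarrow> m ^ 2"
  proof (rule tendsto_sandwich[of "\<lambda>k. m^2" _ _ "\<lambda>k. m^2 + 1 / real (Suc k)"])
    show "\<forall>\<^sub>F k in sequentially. m^2 \<le> norm (d k) ^ 2"
      using mle d(1) m0 by (intro always_eventually allI power_mono) auto
    show "\<forall>\<^sub>F k in sequentially. norm (d k) ^ 2 \<le> m^2 + 1 / real (Suc k)"
      using d(2) by (intro always_eventually allI less_imp_le)
    show "(\<lambda>k. m^2) \<longlonglongrightarrow> m^2" by simp
    have "(\<lambda>k. m^2 + inverse (real (Suc k))) \<longlonglongrightarrow> m^2 + 0"
      by (intro tendsto_intros LIMSEQ_inverse_real_of_nat)
    thus "(\<lambda>k. m^2 + 1 / real (Suc k)) \<longlonglongrightarrow> m^2" by (simp add: inverse_eq_divide)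
  qed
  have "norm p ^ 2 = m ^ 2" using LIMSEQ_unique[OF l1 l2] .
  hence "norm p = m" using m0 by (simp add: power2_eq_iff_nonneg)
  thus ?thesis using pD mle by auto
qed

lemma uniq_min:
  fixes D :: "'a::real_inner set"
  assumes cv: "convex D" and v: "v \<in> D" "\<forall>y\<in>D. norm v \<le> norm y" and d: "d \<in> D" "norm d \<le> norm v"
  shows "d = v"
proof -
  have "(1/2) *\<^sub>R (d + v) = (1/2) *\<^sub>R d + (1 - 1/2) *\<^sub>R v" by (simp add: algebra_simps)
  also have "\<dots> \<in> D" using cv d(1) v(1) unfolding convex_def by auto
  finally have "norm v \<le> norm ((1/2) *\<^sub>R (d + v))" using v(2) by blast
  hence "norm v ^ 2 \<le> norm ((1/2) *\<^sub>R (d + v)) ^ 2" by (intro power_mono) auto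
  moreover have "norm d ^ 2 \<le> norm v ^ 2" using d(2) by (intro power_mono) auto
  ultimately have "norm (d - v) ^ 2 \<le> 0" using para_ident[of d v] by linarith
  thus ?thesis by simp
qed

lemma stepA:
  fixes T :: "'a::real_inner \<Rightarrow> 'a"
  assumes ne: "nonexpansive T" and cv: "convex D" and rD: "range (\<lambda>x. x - T x) \<subseteq> D"
    and v: "v \<in> D" "\<forall>d\<in>D. norm v \<le> norm d" and y: "v + T y = y"
  shows "v + T (y - v) = y - v"
proof -
  define y1 where "y1 = y - v"
  have y1: "y1 = T y" unfolding y1_def using y by (simp add: algebra_simps)
  have uD: "y1 - T y1 \<in> D" using rD by auto
  have "norm (y1 - T y1) = norm (T y - T y1)" using y1 by simp
  also have "\<dots> \<le> norm (y - y1)" using ne unfolding nonexpansive_def by blast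
  also have "\<dots> = norm v" unfolding y1_def by simp
  finally have "y1 - T y1 = v" using uniq_min[OF cv v uD] by blast
  thus ?thesis unfolding y1_def by (simp add: algebra_simps)
qed

lemma iterF:
  fixes T :: "'a::real_inner \<Rightarrow> 'a"
  assumes ne: "nonexpansive T" and cv: "convex D" and rD: "range (\<lambda>x. x - T x) \<subseteq> D"
    and v: "v \<in> D" "\<forall>d\<in>D. norm v \<le> norm d" and y: "v + T y = y"
  shows "v + T (y - real n *\<^sub>R v) = y - real n *\<^sub>R v"
proof (induction n)
  case 0 then show ?case using y by simp
next
  case (Suc n)
  have "v + T ((y - real n *\<^sub>R v) - v) = (y - real n *\<^sub>R v) - v"
    by (rule stepA[OF ne cv rD v Suc])
  moreover have "(y - real n *\<^sub>R v) - v = y - real (Suc n) *\<^sub>R v" by (simp add: algebra_simps)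
  ultimately show ?case by simp
qed

lemma iterT:
  fixes T :: "'a::real_inner \<Rightarrow> 'a"
  assumes ne: "nonexpansive T" and cv: "convex D" and rD: "range (\<lambda>x. x - T x) \<subseteq> D"
    and v: "v \<in> D" "\<forall>d\<in>D. norm v \<le> norm d" and y: "v + T y = y"
  shows "(T ^^ n) y = y - real n *\<^sub>R v"
proof (induction n)
  case 0 then show ?case by simp
next
  case (Suc n)
  have "(T ^^ Suc n) y = T (y - real n *\<^sub>R v)" using Suc by simp
  also have "\<dots> = (y - real n *\<^sub>R v) - v" using iterF[OF ne cv rD v y, of n] by (simp add: algebra_simps)
  also have "\<dots> = y - real (Suc n) *\<^sub>R v" by (simp add: algebra_simps)
  finally show ?case .
qed

lemma convexF:
  fixes T :: "'a::real_inner \<Rightarrow> 'a"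
  assumes ne: "nonexpansive T" and y: "v + T y = y" and y': "v + T y' = y'"
    and l: "0 \<le> l" "l \<le> 1"
  shows "v + T (l *\<^sub>R y + (1 - l) *\<^sub>R y') = l *\<^sub>R y + (1 - l) *\<^sub>R y'"
proof -
  define w where "w = l *\<^sub>R y + (1 - l) *\<^sub>R y'"
  define a where "a = v + T w - y"
  define b where "b = v + T w - y'"
  define dd where "dd = norm (y - y')"
  have a: "a = T w - T y" unfolding a_def using y by (metis add_diff_cancel_left)
  have b: "b = T w - T y'" unfolding b_def using y' by (metis add_diff_cancel_left)
  have wy: "w - y = (1 - l) *\<^sub>R (y' - y)" unfolding w_def by (simp add: algebra_simps)
  have wy': "w - y' = l *\<^sub>R (y - y')" unfolding w_def by (simp add: algebra_simps)
  have na: "norm a \<le> (1 - l) * dd"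
  proof -
    have "norm a \<le> norm (w - y)" unfolding a using ne unfolding nonexpansive_def by blast
    also have "\<dots> = (1 - l) * dd" unfolding wy dd_def using l by (simp add: norm_minus_commute)
    finally show ?thesis .
  qed
  have nb: "norm b \<le> l * dd"
  proof -
    have "norm b \<le> norm (w - y')" unfolding b using ne unfolding nonexpansive_def by blast
    also have "\<dots> = l * dd" unfolding wy' dd_def using l by simp
    finally show ?thesis .
  qed
  have ab: "norm (a - b) = dd" unfolding a_def b_def dd_def by (simp add: norm_minus_commute)
  have sw: "v + T w - w = l *\<^sub>R a + (1 - l) *\<^sub>R b" unfolding a_def b_def w_def by (simp add: algebra_simps)
  have na2: "norm a ^ 2 \<le> ((1 - l) * dd)^2" using na by (intro power_mono) auto
  have nb2: "norm b ^ 2 \<le> (l * dd)^2" using nb by (intro power_mono) auto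
  have "norm (v + T w - w) ^ 2 = l * norm a^2 + (1 - l) * norm b^2 - l * (1 - l) * dd^2"
    unfolding sw inner_comb_ident ab ..
  also have "\<dots> \<le> l * ((1 - l) * dd)^2 + (1 - l) * (l * dd)^2 - l * (1 - l) * dd^2"
    using na2 nb2 l by (intro diff_right_mono add_mono mult_left_mono) auto
  also have "\<dots> = 0" by (simp add: power2_eq_square algebra_simps)
  finally have "norm (v + T w - w) ^ 2 \<le> 0" .
  thus ?thesis unfolding w_def[symmetric] by simp
qed

lemma rayF:
  fixes T :: "'a::real_inner \<Rightarrow> 'a"
  assumes ne: "nonexpansive T" and cv: "convex D" and rD: "range (\<lambda>x. x - T x) \<subseteq> D"
    and v: "v \<in> D" "\<forall>d\<in>D. norm v \<le> norm d" and y: "v + T y = y" and t: "t \<ge> 0"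
  shows "v + T (y - t *\<^sub>R v) = y - t *\<^sub>R v"
proof -
  define n where "n = nat \<lfloor>t\<rfloor>"
  define s where "s = t - real n"
  have n: "real n = of_int \<lfloor>t\<rfloor>" unfolding n_def using t by simp
  have s: "0 \<le> s" "s \<le> 1" unfolding s_def n using floor_correct[of t] by linarith+
  have e: "y - t *\<^sub>R v = (1 - s) *\<^sub>R (y - real n *\<^sub>R v) + (1 - (1 - s)) *\<^sub>R (y - real (Suc n) *\<^sub>R v)"
    unfolding s_def by (simp add: algebra_simps)
  show ?thesis unfolding e
    by (rule convexF[OF ne iterF[OF ne cv rD v y] iterF[OF ne cv rD v y]]) (use s in auto)
qed

theorem proposition2p4:
  fixes T :: "'a::{real_inner,complete_space} \<Rightarrow> 'a" and v y0 :: 'a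
  assumes "nonexpansive T"
    and "v = proj (closure (range (\<lambda>x. x - T x))) 0"
    and "v \<in> range (\<lambda>x. x - T x)"
    and "y0 \<in> Fix (\<lambda>x. v + T x)"
  shows "(\<forall>t\<ge>0. y0 - t *\<^sub>R v \<in> Fix (\<lambda>x. v + T x))
    \<and> {y - t *\<^sub>R v | y t. y \<in> Fix (\<lambda>x. v + T x) \<and> t \<ge> 0} = Fix (\<lambda>x. v + T x)
    \<and> (\<forall>t\<ge>0. - (t *\<^sub>R v) \<in> rec_cone (Fix (\<lambda>x. v + T x)))
    \<and> (\<forall>n. (T ^^ n) y0 = y0 - real n *\<^sub>R v)
    \<and> {t *\<^sub>R v + z | t z. t \<le> 1 \<and> z \<in> Fix (\<lambda>x. T (x + v))} \<subseteq> Fix (\<lambda>x. v + T x)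
    \<and> Fix (\<lambda>x. T (x + v)) \<subseteq> Fix (\<lambda>x. v + T x)
    \<and> (\<forall>x. fejer_monotone (\<lambda>n. (T ^^ n) x + real n *\<^sub>R v) (Fix (\<lambda>x. v + T x))
          \<and> fejer_monotone (\<lambda>n. (T ^^ n) x + real n *\<^sub>R v) (Fix (\<lambda>x. T (x + v))))
    \<and> (\<forall>x0 \<in> Fix (\<lambda>x. T (x + v)). \<forall>n. (T ^^ n) x0 = x0 - real n *\<^sub>R v
          \<and> (T ^^ n) x0 \<in> Fix (\<lambda>x. T (x + v)))"
proof -
  note ne = assms(1)
  define D where "D = closure (range (\<lambda>x. x - T x))"
  have cv: "convex D" unfolding D_def by (rule D_convex[OF ne])
  have rD: "range (\<lambda>x. x - T x) \<subseteq> D" unfolding D_def by (rule closure_subset)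
  have "\<exists>p\<in>D. \<forall>y\<in>D. norm p \<le> norm y"
    by (rule min_norm_exists[OF cv]) (auto simp: D_def)
  hence "\<exists>p. p \<in> D \<and> (\<forall>y\<in>D. dist 0 p \<le> dist 0 y)" by auto
  hence "v \<in> D \<and> (\<forall>y\<in>D. dist 0 v \<le> dist 0 y)"
    unfolding assms(2) D_def[symmetric] proj_def by (rule someI_ex)
  hence v: "v \<in> D" "\<forall>d\<in>D. norm v \<le> norm d" by auto
  let ?F = "Fix (\<lambda>x. v + T x)"
  let ?G = "Fix (\<lambda>x. T (x + v))"
  have F: "y \<in> ?F \<longleftrightarrow> v + T y = y" for y unfolding Fix_def by simp
  have G: "z \<in> ?G \<longleftrightarrow> T (z + v) = z" for z unfolding Fix_def by simp
  have ray: "y - t *\<^sub>R v \<in> ?F" if "y \<in> ?F" "t \<ge> 0" for y t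
    using rayF[OF ne cv rD v _ that(2)] that(1) F by blast
  have y0: "v + T y0 = y0" using assms(4) F by blast
  have GF: "z + v \<in> ?F" if "z \<in> ?G" for z using that unfolding F G by (simp add: algebra_simps)
  have GF2: "z \<in> ?F" if "z \<in> ?G" for z using ray[OF GF[OF that], of 1] by simp
  have p1: "\<forall>t\<ge>0. y0 - t *\<^sub>R v \<in> ?F" using ray assms(4) by blast
  have p2: "{y - t *\<^sub>R v | y t. y \<in> ?F \<and> t \<ge> 0} = ?F"
  proof
    show "{y - t *\<^sub>R v | y t. y \<in> ?F \<and> t \<ge> 0} \<subseteq> ?F" using ray by blast
    show "?F \<subseteq> {y - t *\<^sub>R v | y t. y \<in> ?F \<and> t \<ge> 0}"
    proof
      fix y assume "y \<in> ?F"
      hence "y = y - 0 *\<^sub>R v \<and> y \<in> ?F \<and> (0::real) \<ge> 0" by simp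
      thus "y \<in> {y - t *\<^sub>R v | y t. y \<in> ?F \<and> t \<ge> 0}" by blast
    qed
  qed
  have p3: "\<forall>t\<ge>0. - (t *\<^sub>R v) \<in> rec_cone ?F"
    unfolding rec_cone_def using ray by (simp add: add.commute)
  have p4: "\<forall>n. (T ^^ n) y0 = y0 - real n *\<^sub>R v" using iterT[OF ne cv rD v y0] by blast
  have p5: "{t *\<^sub>R v + z | t z. t \<le> 1 \<and> z \<in> ?G} \<subseteq> ?F"
  proof
    fix q assume "q \<in> {t *\<^sub>R v + z | t z. t \<le> 1 \<and> z \<in> ?G}"
    then obtain t z where q: "q = t *\<^sub>R v + z" "t \<le> 1" "z \<in> ?G" by blast
    have "q = (z + v) - (1 - t) *\<^sub>R v" unfolding q by (simp add: algebra_simps)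
    thus "q \<in> ?F" using ray[OF GF[OF q(3)], of "1 - t"] q(2) by simp
  qed
  have p6: "?G \<subseteq> ?F" using GF2 by blast
  have fej: "fejer_monotone (\<lambda>n. (T ^^ n) x + real n *\<^sub>R v) C" if "C \<subseteq> ?F" for x C
    unfolding fejer_monotone_def
  proof (intro ballI allI)
    fix c n assume "c \<in> C"
    hence c: "v + T c = c" using that F by blast
    have cn: "T (c - real n *\<^sub>R v) = c - real (Suc n) *\<^sub>R v"
      using iterF[OF ne cv rD v c, of n] by (simp add: algebra_simps)
    have "(T ^^ Suc n) x + real (Suc n) *\<^sub>R v - c = T ((T ^^ n) x) - T (c - real n *\<^sub>R v)"
      unfolding cn by (simp add: algebra_simps)
    hence "norm ((T ^^ Suc n) x + real (Suc n) *\<^sub>R v - c) \<le> norm ((T ^^ n) x - (c - real n *\<^sub>R v))"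
      using ne unfolding nonexpansive_def by metis
    also have "(T ^^ n) x - (c - real n *\<^sub>R v) = (T ^^ n) x + real n *\<^sub>R v - c" by (simp add: algebra_simps)
    finally show "norm ((T ^^ Suc n) x + real (Suc n) *\<^sub>R v - c) \<le> norm ((T ^^ n) x + real n *\<^sub>R v - c)" .
  qed
  have p7: "\<forall>x. fejer_monotone (\<lambda>n. (T ^^ n) x + real n *\<^sub>R v) ?F
          \<and> fejer_monotone (\<lambda>n. (T ^^ n) x + real n *\<^sub>R v) ?G"
    using fej p6 by blast
  have p8: "\<forall>x0 \<in> ?G. \<forall>n. (T ^^ n) x0 = x0 - real n *\<^sub>R v \<and> (T ^^ n) x0 \<in> ?G"
  proof (intro ballI allI)
    fix x0 n assume x0: "x0 \<in> ?G"
    have a: "(T ^^ n) x0 = x0 - real n *\<^sub>R v"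
      using iterT[OF ne cv rD v, of x0 n] GF2[OF x0] F by blast
    have xv: "v + T (x0 + v) = x0 + v" using GF[OF x0] F by blast
    have "v + T ((x0 + v) - real n *\<^sub>R v) = (x0 + v) - real n *\<^sub>R v" by (rule iterF[OF ne cv rD v xv])
    moreover have "(x0 + v) - real n *\<^sub>R v = (x0 - real n *\<^sub>R v) + v" by (simp add: algebra_simps)
    ultimately have "T ((x0 - real n *\<^sub>R v) + v) = x0 - real n *\<^sub>R v" by (simp add: algebra_simps)
    thus "(T ^^ n) x0 = x0 - real n *\<^sub>R v \<and> (T ^^ n) x0 \<in> ?G" using a G by simp
  qed
  show ?thesis using p1 p2 p3 p4 p5 p6 p7 p8 by blast
qed

end
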